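(* Let $g\geq 2$ and let $\mathfrak t_{(g)}(1)$ be the Lie algebra over a field $\mathbb K$ of characteristic zero generated by $x_1,\dots,x_g,y_1,\dots,y_g,t_{11}$ subject to the relations that $t_{11}$ is central and $\sum_{k=1}^g[x_k,y_k]=-(2-2g)t_{11}$. Then the center of $\mathfrak t_{(g)}(1)$ is one-dimensional, spanned by $t_{11}$. *)

theory Defs
  imports Main
begin

datatype gen = GX nat | GY nat | GT

text \<open>The free associative algebra over 'k on the letters gen, realised as
  functions from words to coefficients (formal series); product = concatenation
  convolution. The free Lie algebra is the Lie subalgebra generated by the letters.\<close>
type_synonym 'k nc = "gen list \<Rightarrow> 'k"

definition nc_mul :: "'k::field nc \<Rightarrow> 'k nc \<Rightarrow> 'k nc" where
  "nc_mul p q = (\<lambda>w. \<Sum>i\<le>length w. p (take i w) * q (drop i w))"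

definition nc_add :: "'k::field nc \<Rightarrow> 'k nc \<Rightarrow> 'k nc" where
  "nc_add p q = (\<lambda>w. p w + q w)"

definition nc_smult :: "'k::field \<Rightarrow> 'k nc \<Rightarrow> 'k nc" where
  "nc_smult c p = (\<lambda>w. c * p w)"

definition nc_bracket :: "'k::field nc \<Rightarrow> 'k nc \<Rightarrow> 'k nc" where
  "nc_bracket p q = (\<lambda>w. nc_mul p q w - nc_mul q p w)"

definition letter :: "gen \<Rightarrow> 'k::field nc" where
  "letter a = (\<lambda>w. if w = [a] then 1 else 0)"

definition gens :: "nat \<Rightarrow> gen set" where
  "gens g = {GX k | k. k \<in> {1..g}} \<union> {GY k | k. k \<in> {1..g}} \<union> {GT}"

inductive_set free_lie :: "nat \<Rightarrow> 'k::field nc set" for g where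
  fl_gen: "a \<in> gens g \<Longrightarrow> letter a \<in> free_lie g"
| fl_zero: "(\<lambda>_. 0) \<in> free_lie g"
| fl_add: "p \<in> free_lie g \<Longrightarrow> q \<in> free_lie g \<Longrightarrow> nc_add p q \<in> free_lie g"
| fl_smult: "p \<in> free_lie g \<Longrightarrow> nc_smult c p \<in> free_lie g"
| fl_bracket: "p \<in> free_lie g \<Longrightarrow> q \<in> free_lie g \<Longrightarrow> nc_bracket p q \<in> free_lie g"

definition rels :: "nat \<Rightarrow> 'k::field nc set" where
  "rels g = {nc_bracket (letter GT) (letter a) | a. a \<in> gens g} \<union>
     {nc_add (\<lambda>w. \<Sum>k\<in>{1..g}. nc_bracket (letter (GX k)) (letter (GY k)) w)
             (nc_smult (2 - 2 * of_nat g) (letter GT))}"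

inductive_set rel_ideal :: "nat \<Rightarrow> 'k::field nc set" for g where
  ri_rel: "r \<in> rels g \<Longrightarrow> r \<in> rel_ideal g"
| ri_zero: "(\<lambda>_. 0) \<in> rel_ideal g"
| ri_add: "p \<in> rel_ideal g \<Longrightarrow> q \<in> rel_ideal g \<Longrightarrow> nc_add p q \<in> rel_ideal g"
| ri_smult: "p \<in> rel_ideal g \<Longrightarrow> nc_smult c p \<in> rel_ideal g"
| ri_bracket: "p \<in> rel_ideal g \<Longrightarrow> q \<in> free_lie g \<Longrightarrow> nc_bracket p q \<in> rel_ideal g"

text \<open>Representatives (in the free Lie algebra) of central elements of
  t_(g)(1) = free_lie g / rel_ideal g.\<close>
definition center_reps :: "nat \<Rightarrow> 'k::field nc set" where
  "center_reps g = {u \<in> free_lie g. \<forall>v \<in> free_lie g. nc_bracket u v \<in> rel_ideal g}"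

end

theory Submission
  imports Defs "HOL-Library.Nat_Bijection"
begin


definition one :: "'k::field nc" where "one = (\<lambda>w. if w = [] then 1 else 0)"
definition mon :: "gen list \<Rightarrow> 'k::field nc" where "mon u = (\<lambda>w. if w = u then 1 else 0)"
definition supp :: "'k::field nc \<Rightarrow> gen list set" where "supp p = {w. p w \<noteq> 0}"
abbreviation fin :: "'k::field nc \<Rightarrow> bool" where "fin p \<equiv> finite (supp p)"
definition lin :: "(gen list \<Rightarrow> 'k::field nc) \<Rightarrow> 'k nc \<Rightarrow> 'k nc" where
  "lin F p = (\<lambda>v. \<Sum>w\<in>supp p. p w * F w v)"

lemma nc_mul_assoc: "nc_mul (nc_mul p q) r = nc_mul p (nc_mul q r)"
proof (rule ext)
  fix w :: "gen list"
  define n where "n = length w"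
  define G where "G = (\<lambda>j l. p (take j w) * q (take l (drop j w)) * r (drop (j + l) w))"
  have "nc_mul (nc_mul p q) r w = (\<Sum>k\<le>n. \<Sum>j\<le>k. G j (k - j))"
    unfolding nc_mul_def G_def n_def
    by (auto simp: sum_distrib_right drop_take min_def intro!: sum.cong)
  also have "\<dots> = (\<Sum>(j,l)\<in>{(j,l). j + l \<le> n}. G j l)"
    by (rule sum.triangle_reindex_eq[symmetric])
  also have "{(j,l). j + l \<le> n} = Sigma {..n} (\<lambda>j. {..n-j})" by auto
  also have "(\<Sum>(j,l)\<in>Sigma {..n} (\<lambda>j. {..n-j}). G j l) = (\<Sum>j\<le>n. \<Sum>l\<le>n-j. G j l)"
    by (rule sum.Sigma[symmetric]) auto
  also have "\<dots> = nc_mul p (nc_mul q r) w"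
    unfolding nc_mul_def G_def n_def
    by (auto simp: sum_distrib_left mult.assoc add.commute intro!: sum.cong)
  finally show "nc_mul (nc_mul p q) r w = nc_mul p (nc_mul q r) w" .
qed

lemma nc_mul_add_left: "nc_mul (\<lambda>w. p w + q w) r = (\<lambda>w. nc_mul p r w + nc_mul q r w)"
  unfolding nc_mul_def by (auto simp: algebra_simps sum.distrib)
lemma nc_mul_add_right: "nc_mul r (\<lambda>w. p w + q w) = (\<lambda>w. nc_mul r p w + nc_mul r q w)"
  unfolding nc_mul_def by (auto simp: algebra_simps sum.distrib)
lemma nc_mul_diff_left: "nc_mul (\<lambda>w. p w - q w) r = (\<lambda>w. nc_mul p r w - nc_mul q r w)"
  unfolding nc_mul_def by (auto simp: algebra_simps sum_subtractf)
lemma nc_mul_diff_right: "nc_mul r (\<lambda>w. p w - q w) = (\<lambda>w. nc_mul r p w - nc_mul r q w)"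
  unfolding nc_mul_def by (auto simp: algebra_simps sum_subtractf)
lemma nc_mul_smult_left: "nc_mul (\<lambda>w. c * p w) r = (\<lambda>w. c * nc_mul p r w)"
  unfolding nc_mul_def by (auto simp: algebra_simps sum_distrib_left)
lemma nc_mul_smult_right: "nc_mul r (\<lambda>w. c * p w) = (\<lambda>w. c * nc_mul r p w)"
  unfolding nc_mul_def by (auto simp: algebra_simps sum_distrib_left)
lemma nc_mul_zero_left: "nc_mul (\<lambda>w. 0) r = (\<lambda>w. 0)"
  unfolding nc_mul_def by auto
lemma nc_mul_zero_right: "nc_mul r (\<lambda>w. 0) = (\<lambda>w. 0)"
  unfolding nc_mul_def by auto
lemma nc_mul_sum_left:
  "nc_mul (\<lambda>w. \<Sum>u\<in>S. c u * X u w) q = (\<lambda>w. \<Sum>u\<in>S. c u * nc_mul (X u) q w)"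
  unfolding nc_mul_def
  by (auto simp: sum_distrib_right sum_distrib_left mult.assoc intro: sum.swap)
lemma nc_mul_sum_right:
  "nc_mul q (\<lambda>w. \<Sum>u\<in>S. c u * X u w) = (\<lambda>w. \<Sum>u\<in>S. c u * nc_mul q (X u) w)"
  unfolding nc_mul_def
  by (auto simp: sum_distrib_right sum_distrib_left mult.assoc mult.left_commute intro: sum.swap)

lemma nc_mul_mon_left:
  "nc_mul (mon u) q w = (if take (length u) w = u then q (drop (length u) w) else 0)"
proof -
  have "nc_mul (mon u) q w = (\<Sum>i\<le>length w. if i = length u then
      (if take (length u) w = u then q (drop (length u) w) else 0) else 0)"
    unfolding nc_mul_def mon_def
    by (rule sum.cong) auto
  also have "\<dots> = (if take (length u) w = u then q (drop (length u) w) else 0)"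
    by (auto simp: sum.delta dest: arg_cong[where f=length])
  finally show ?thesis .
qed

lemma nc_mul_mon_right:
  "nc_mul q (mon u) w = (if length u \<le> length w \<and> drop (length w - length u) w = u
     then q (take (length w - length u) w) else 0)"
proof -
  have "nc_mul q (mon u) w = (\<Sum>i\<le>length w. if i = length w - length u then
      (if length u \<le> length w \<and> drop (length w - length u) w = u then q (take (length w - length u) w) else 0) else 0)"
    unfolding nc_mul_def mon_def
    by (rule sum.cong) auto
  also have "\<dots> = (if length u \<le> length w \<and> drop (length w - length u) w = u then q (take (length w - length u) w) else 0)"
    by (auto simp: sum.delta)
  finally show ?thesis .
qed

lemma one_mon: "one = mon []" unfolding one_def mon_def by auto
lemma letter_mon: "letter a = mon [a]" unfolding letter_def mon_def by auto

lemma nc_mul_one_left: "nc_mul one q = q"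
  by (rule ext) (simp add: one_mon nc_mul_mon_left)
lemma nc_mul_one_right: "nc_mul q one = q"
  by (rule ext) (simp add: one_mon nc_mul_mon_right)

lemma mon_append: "mon (u @ v) = nc_mul (mon u) (mon v)"
proof (rule ext)
  fix w
  show "mon (u @ v) w = nc_mul (mon u) (mon v) w"
    unfolding nc_mul_mon_left by (auto simp: mon_def append_eq_conv_conj) (metis append_take_drop_id)
qed

lemma mon_Cons: "mon (a # v) = nc_mul (letter a) (mon v)"
  using mon_append[of "[a]" v] by (simp add: letter_mon)

lemma fin_mon: "fin (mon u)"
  by (rule finite_subset[of _ "{u}"]) (auto simp: supp_def mon_def)
lemma fin_letter: "fin (letter a)" by (simp add: letter_mon fin_mon)
lemma fin_one: "fin one" by (simp add: one_mon fin_mon)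
lemma fin_zero: "fin (\<lambda>w. 0)" by (simp add: supp_def)
lemma fin_add: "fin p \<Longrightarrow> fin q \<Longrightarrow> fin (\<lambda>w. p w + q w)"
  by (rule finite_subset[of _ "supp p \<union> supp q"]) (auto simp: supp_def)
lemma fin_diff: "fin p \<Longrightarrow> fin q \<Longrightarrow> fin (\<lambda>w. p w - q w)"
  by (rule finite_subset[of _ "supp p \<union> supp q"]) (auto simp: supp_def)
lemma fin_smult: "fin p \<Longrightarrow> fin (\<lambda>w. c * p w)"
  by (rule finite_subset[of _ "supp p"]) (auto simp: supp_def)
lemma fin_sum: "finite S \<Longrightarrow> (\<And>u. u \<in> S \<Longrightarrow> fin (X u)) \<Longrightarrow> fin (\<lambda>w. \<Sum>u\<in>S. c u * X u w)"
  apply (rule finite_subset[of _ "\<Union>u\<in>S. supp (X u)"])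
   apply (auto simp: supp_def)
  by (metis (mono_tags, lifting) mult_zero_right sum.neutral)
lemma fin_sum': "finite S \<Longrightarrow> (\<And>u. u \<in> S \<Longrightarrow> fin (X u)) \<Longrightarrow> fin (\<lambda>w. \<Sum>u\<in>S. X u w)"
  using fin_sum[of S X "\<lambda>_. 1"] by simp
lemma fin_mul: "fin p \<Longrightarrow> fin q \<Longrightarrow> fin (nc_mul p q)"
proof (rule finite_subset[of _ "(\<lambda>(u,v). u @ v) ` (supp p \<times> supp q)"])
  show "supp (nc_mul p q) \<subseteq> (\<lambda>(u,v). u @ v) ` (supp p \<times> supp q)"
  proof
    fix w assume "w \<in> supp (nc_mul p q)"
    then have "(\<Sum>i\<le>length w. p (take i w) * q (drop i w)) \<noteq> 0"
      by (simp add: supp_def nc_mul_def)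
    then obtain i where "p (take i w) * q (drop i w) \<noteq> 0"
      by (meson sum.neutral)
    then show "w \<in> (\<lambda>(u,v). u @ v) ` (supp p \<times> supp q)"
      by (auto simp: supp_def image_iff) (metis append_take_drop_id)
  qed
qed auto
lemma fin_bracket: "fin p \<Longrightarrow> fin q \<Longrightarrow> fin (nc_bracket p q)"
  unfolding nc_bracket_def by (intro fin_diff fin_mul)

lemma lin_superset:
  assumes "finite T" "supp p \<subseteq> T"
  shows "lin F p x = (\<Sum>w\<in>T. p w * F w x)"
  unfolding lin_def
  by (rule sum.mono_neutral_left) (use assms in \<open>auto simp: supp_def\<close>)

lemma lin_sum:
  assumes S: "finite S" and Y: "\<And>u. u \<in> S \<Longrightarrow> fin (Y u)"
  shows "lin F (\<lambda>w. \<Sum>u\<in>S. c u * Y u w) = (\<lambda>x. \<Sum>u\<in>S. c u * lin F (Y u) x)"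
proof (rule ext)
  fix x
  define T where "T = (\<Union>u\<in>S. supp (Y u))"
  have T: "finite T" using S Y by (auto simp: T_def)
  have "lin F (\<lambda>w. \<Sum>u\<in>S. c u * Y u w) x = (\<Sum>w\<in>T. (\<Sum>u\<in>S. c u * Y u w) * F w x)"
    apply (rule lin_superset[OF T])
    apply (auto simp: supp_def T_def)
    by (metis (mono_tags, lifting) mult_zero_right sum.neutral)
  also have "\<dots> = (\<Sum>u\<in>S. c u * (\<Sum>w\<in>T. Y u w * F w x))"
    by (simp add: sum_distrib_right sum_distrib_left mult.assoc sum.swap[of _ T])
  also have "\<dots> = (\<Sum>u\<in>S. c u * lin F (Y u) x)"
    by (rule sum.cong[OF refl], subst lin_superset[OF T]) (auto simp: T_def)
  finally show "lin F (\<lambda>w. \<Sum>u\<in>S. c u * Y u w) x = (\<Sum>u\<in>S. c u * lin F (Y u) x)" .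
qed

lemma lin_add: "fin p \<Longrightarrow> fin q \<Longrightarrow> lin F (\<lambda>w. p w + q w) = (\<lambda>x. lin F p x + lin F q x)"
  apply (rule ext)
  apply (subst (1 2 3) lin_superset[of "supp p \<union> supp q"])
  by (auto simp: supp_def algebra_simps sum.distrib)
lemma lin_diff: "fin p \<Longrightarrow> fin q \<Longrightarrow> lin F (\<lambda>w. p w - q w) = (\<lambda>x. lin F p x - lin F q x)"
  apply (rule ext)
  apply (subst (1 2 3) lin_superset[of "supp p \<union> supp q"])
  by (auto simp: supp_def algebra_simps sum_subtractf)
lemma lin_smult: "fin p \<Longrightarrow> lin F (\<lambda>w. c * p w) = (\<lambda>x. c * lin F p x)"
  apply (rule ext)
  apply (subst (1 2) lin_superset[of "supp p"])
  by (auto simp: supp_def algebra_simps sum_distrib_left)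
lemma lin_zero: "lin F (\<lambda>w. 0) = (\<lambda>x. 0)"
  by (simp add: lin_def supp_def)
lemma lin_mon: "lin F (mon u) = F u"
  apply (rule ext)
  apply (subst lin_superset[of "{u}"])
  by (auto simp: supp_def mon_def)
lemma lin_mon_id: "fin p \<Longrightarrow> lin mon p = p"
  apply (rule ext)
  apply (subst lin_superset[of "supp p"])
  by (auto simp: supp_def mon_def if_distrib cong: if_cong)

lemma lin_fadd: "lin (\<lambda>w x. F w x + G w x) p = (\<lambda>x. lin F p x + lin G p x)"
  by (auto simp: lin_def algebra_simps sum.distrib)
lemma lin_fdiff: "lin (\<lambda>w x. F w x - G w x) p = (\<lambda>x. lin F p x - lin G p x)"
  by (auto simp: lin_def algebra_simps sum_subtractf)
lemma lin_fsmult: "lin (\<lambda>w x. c * F w x) p = (\<lambda>x. c * lin F p x)"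
  by (auto simp: lin_def algebra_simps sum_distrib_left)
lemma lin_fzero: "lin (\<lambda>w x. 0) p = (\<lambda>x. 0)"
  by (auto simp: lin_def)

lemma lin_fin: "fin p \<Longrightarrow> (\<And>w. fin (F w)) \<Longrightarrow> fin (lin F p)"
  unfolding lin_def by (rule fin_sum) auto

lemma mul_lin_left: "nc_mul (lin G p) q = lin (\<lambda>u. nc_mul (G u) q) p"
  unfolding lin_def by (rule nc_mul_sum_left)
lemma mul_lin_right: "nc_mul q (lin G p) = lin (\<lambda>u. nc_mul q (G u)) p"
  unfolding lin_def by (rule nc_mul_sum_right)

lemma supp_mul_mon: "supp (nc_mul (mon u) q) = (\<lambda>v. u @ v) ` supp q"
  by (auto simp: supp_def nc_mul_mon_left image_iff append_eq_conv_conj)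
     (metis append_take_drop_id)

lemma lin_mul_mon: "lin F (nc_mul (mon u) q) = lin (\<lambda>v. F (u @ v)) q"
proof (rule ext)
  fix x
  have "lin F (nc_mul (mon u) q) x = (\<Sum>w\<in>(\<lambda>v. u @ v) ` supp q. nc_mul (mon u) q w * F w x)"
    by (simp add: lin_def supp_mul_mon)
  also have "\<dots> = (\<Sum>v\<in>supp q. nc_mul (mon u) q (u @ v) * F (u @ v) x)"
    by (subst sum.reindex) (auto simp: inj_on_def)
  also have "\<dots> = lin (\<lambda>v. F (u @ v)) q x"
    by (simp add: lin_def nc_mul_mon_left)
  finally show "lin F (nc_mul (mon u) q) x = lin (\<lambda>v. F (u @ v)) q x" .
qed

lemma lin_mul:
  assumes "fin p" "fin q"
  shows "lin F (nc_mul p q) = lin (\<lambda>u. lin (\<lambda>v. F (u @ v)) q) p"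
proof -
  have "nc_mul p q = nc_mul (lin mon p) q" using assms by (simp add: lin_mon_id)
  also have "\<dots> = (\<lambda>w. \<Sum>u\<in>supp p. p u * nc_mul (mon u) q w)"
    unfolding lin_def by (rule nc_mul_sum_left)
  finally have "lin F (nc_mul p q) = lin F (\<lambda>w. \<Sum>u\<in>supp p. p u * nc_mul (mon u) q w)" by simp
  also have "\<dots> = (\<lambda>x. \<Sum>u\<in>supp p. p u * lin F (nc_mul (mon u) q) x)"
    by (rule lin_sum) (use assms in \<open>auto intro: fin_mul fin_mon\<close>)
  also have "\<dots> = lin (\<lambda>u. lin (\<lambda>v. F (u @ v)) q) p"
    by (simp only: lin_mul_mon) (simp only: lin_def)
  finally show ?thesis .
qed



lemma br_antisym: "nc_bracket q p = (\<lambda>w. - nc_bracket p q w)"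
  unfolding nc_bracket_def by auto
lemma br_add_left: "nc_bracket (\<lambda>w. p w + q w) r = (\<lambda>w. nc_bracket p r w + nc_bracket q r w)"
  unfolding nc_bracket_def by (rule ext) (simp add: nc_mul_add_left nc_mul_add_right algebra_simps)
lemma br_add_right: "nc_bracket r (\<lambda>w. p w + q w) = (\<lambda>w. nc_bracket r p w + nc_bracket r q w)"
  unfolding nc_bracket_def by (rule ext) (simp add: nc_mul_add_left nc_mul_add_right algebra_simps)
lemma br_diff_left: "nc_bracket (\<lambda>w. p w - q w) r = (\<lambda>w. nc_bracket p r w - nc_bracket q r w)"
  unfolding nc_bracket_def by (rule ext) (simp add: nc_mul_diff_left nc_mul_diff_right algebra_simps)
lemma br_diff_right: "nc_bracket r (\<lambda>w. p w - q w) = (\<lambda>w. nc_bracket r p w - nc_bracket r q w)"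
  unfolding nc_bracket_def by (rule ext) (simp add: nc_mul_diff_left nc_mul_diff_right algebra_simps)
lemma br_smult_left: "nc_bracket (\<lambda>w. c * p w) r = (\<lambda>w. c * nc_bracket p r w)"
  unfolding nc_bracket_def by (rule ext) (simp add: nc_mul_smult_left nc_mul_smult_right algebra_simps algebra_simps)
lemma br_smult_right: "nc_bracket r (\<lambda>w. c * p w) = (\<lambda>w. c * nc_bracket r p w)"
  unfolding nc_bracket_def by (rule ext) (simp add: nc_mul_smult_left nc_mul_smult_right algebra_simps algebra_simps)
lemma br_zero_left: "nc_bracket (\<lambda>w. 0) r = (\<lambda>w. 0)"
  unfolding nc_bracket_def by (rule ext) (simp add: nc_mul_zero_left nc_mul_zero_right algebra_simps)
lemma br_zero_right: "nc_bracket r (\<lambda>w. 0) = (\<lambda>w. 0)"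
  unfolding nc_bracket_def by (rule ext) (simp add: nc_mul_zero_left nc_mul_zero_right algebra_simps)
lemma br_self: "nc_bracket p p = (\<lambda>w. 0)"
  unfolding nc_bracket_def by simp
lemma jacobi: "nc_bracket x (nc_bracket y z) =
   (\<lambda>w. nc_bracket (nc_bracket x y) z w + nc_bracket y (nc_bracket x z) w)"
  unfolding nc_bracket_def
  by (rule ext) (simp add: nc_mul_diff_left nc_mul_diff_right nc_mul_assoc algebra_simps)

context fixes g :: nat begin

lemma fl_fin: "p \<in> free_lie g \<Longrightarrow> fin (p :: 'k::field nc)"
  by (induction rule: free_lie.induct)
     (auto simp: nc_add_def nc_smult_def intro: fin_letter fin_zero fin_add fin_smult fin_bracket)

lemma fl_nil: "p \<in> free_lie g \<Longrightarrow> (p :: 'k::field nc) [] = 0"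
  by (induction rule: free_lie.induct)
     (auto simp: nc_add_def nc_smult_def letter_def nc_bracket_def nc_mul_def)

lemma F_add: "p \<in> free_lie g \<Longrightarrow> q \<in> free_lie g \<Longrightarrow> (\<lambda>w. p w + q w) \<in> free_lie g"
  using fl_add[of p g q] by (simp add: nc_add_def)
lemma F_smult: "p \<in> free_lie g \<Longrightarrow> (\<lambda>w. c * p w) \<in> free_lie g"
  using fl_smult[of p g c] by (simp add: nc_smult_def)
lemma F_diff: "p \<in> free_lie g \<Longrightarrow> q \<in> free_lie g \<Longrightarrow> (\<lambda>w. p w - q w) \<in> free_lie g"
  using F_add[of p "\<lambda>w. (-1) * q w"] F_smult[of q "-1"] by simp
lemma F_sum: "finite S \<Longrightarrow> (\<And>k. k \<in> S \<Longrightarrow> X k \<in> free_lie g) \<Longrightarrow> (\<lambda>w. \<Sum>k\<in>S. X k w) \<in> free_lie g"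
  by (induction S rule: finite_induct) (auto intro: fl_zero F_add)

lemma ri_fin: "p \<in> rel_ideal g \<Longrightarrow> fin (p :: 'k::field nc)"
proof (induction rule: rel_ideal.induct)
  case (ri_rel r)
  then show ?case
    by (auto simp: rels_def nc_add_def nc_smult_def
        intro!: fin_bracket fin_letter fin_add fin_smult fin_sum')
next
  case (ri_bracket p q) then show ?case by (auto intro: fin_bracket fl_fin)
qed (auto simp: nc_add_def nc_smult_def intro: fin_zero fin_add fin_smult)

lemma I_add: "p \<in> rel_ideal g \<Longrightarrow> q \<in> rel_ideal g \<Longrightarrow> (\<lambda>w. p w + q w) \<in> rel_ideal g"
  using ri_add[of p g q] by (simp add: nc_add_def)
lemma I_smult: "p \<in> rel_ideal g \<Longrightarrow> (\<lambda>w. c * p w) \<in> rel_ideal g"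
  using ri_smult[of p g c] by (simp add: nc_smult_def)
lemma I_diff: "p \<in> rel_ideal g \<Longrightarrow> q \<in> rel_ideal g \<Longrightarrow> (\<lambda>w. p w - q w) \<in> rel_ideal g"
  using I_add[of p "\<lambda>w. (-1) * q w"] I_smult[of q "-1"] by simp
lemma I_neg: "p \<in> rel_ideal g \<Longrightarrow> (\<lambda>w. - p w) \<in> rel_ideal g"
  using I_smult[of p "-1"] by simp
lemma I_br_right: "p \<in> rel_ideal g \<Longrightarrow> q \<in> free_lie g \<Longrightarrow> nc_bracket p q \<in> rel_ideal g"
  by (rule ri_bracket)
lemma I_br_left: "p \<in> rel_ideal g \<Longrightarrow> q \<in> free_lie g \<Longrightarrow> nc_bracket q p \<in> rel_ideal g"
  using I_neg[OF ri_bracket[of p g q]] by (simp add: br_antisym[of q p])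

lemma t_br: "q \<in> free_lie g \<Longrightarrow> nc_bracket (letter GT) q \<in> (rel_ideal g :: 'k::field nc set)"
proof (induction rule: free_lie.induct)
  case (fl_gen a) then show ?case by (intro ri_rel) (auto simp: rels_def)
next
  case fl_zero then show ?case by (simp add: br_zero_right ri_zero)
next
  case (fl_add p q) then show ?case by (simp add: nc_add_def br_add_right I_add)
next
  case (fl_smult p c) then show ?case by (simp add: nc_smult_def br_smult_right I_smult)
next
  case (fl_bracket p q)
  have "nc_bracket (letter GT) (nc_bracket p q) =
     (\<lambda>w. nc_bracket (nc_bracket (letter GT) p) q w - nc_bracket (nc_bracket (letter GT) q) p w)"
    by (subst jacobi) (simp add: br_antisym[of p "nc_bracket (letter GT) q"])
  moreover have "\<dots> \<in> rel_ideal g"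
    using fl_bracket I_br_right[of "nc_bracket (letter GT) p" q] I_br_right[of "nc_bracket (letter GT) q" p]
    by (intro I_diff) auto
  ultimately show ?case by simp
qed

end



lemma mul_nil: "nc_mul p q [] = p [] * q []" by (simp add: nc_mul_def)
lemma mul_one: "nc_mul p q [a] = p [] * q [a] + p [a] * q []" by (simp add: nc_mul_def)
lemma mul_two: "nc_mul p q [a, b] = p [] * q [a, b] + p [a] * q [b] + p [a, b] * q []"
  by (simp add: nc_mul_def)

definition inv8 :: "nat \<Rightarrow> 'k::field nc \<Rightarrow> bool" where
  "inv8 g p \<longleftrightarrow> p [] = 0 \<and> (\<forall>a. a \<noteq> GT \<longrightarrow> p [a] = 0) \<and>
     p [GT] + (2 * of_nat g - 2) * p [GX 1, GY 1] = 0"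

lemma inv_I:
  assumes g: "g \<ge> 1" and p: "p \<in> rel_ideal g"
  shows "inv8 g (p :: 'k::field nc)"
  using p
proof (induction rule: rel_ideal.induct)
  case (ri_rel r)
  from ri_rel consider (a) a where "r = nc_bracket (letter GT) (letter a)"
    | (b) "r = nc_add (\<lambda>w. \<Sum>k\<in>{1..g}. nc_bracket (letter (GX k)) (letter (GY k)) w)
            (nc_smult (2 - 2 * of_nat g) (letter GT))"
    unfolding rels_def by blast
  then show ?case
  proof cases
    case (a a) then show ?thesis
      by (auto simp: inv8_def nc_bracket_def mul_nil mul_one mul_two letter_def)
  next
    case b
    have s1: "(\<Sum>k\<in>{1..g}. nc_bracket (letter (GX k)) (letter (GY k)) [GX 1, GY 1]) = (1::'k)"
    proof -
      have "(\<Sum>k\<in>{1..g}. nc_bracket (letter (GX k)) (letter (GY k)) [GX 1, GY 1]) =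
            (\<Sum>k\<in>{1..g}. if k = 1 then (1::'k) else 0)"
        by (rule sum.cong) (auto simp: nc_bracket_def mul_two letter_def)
      also have "\<dots> = 1" using g by (simp add: sum.delta)
      finally show ?thesis .
    qed
    show ?thesis
      unfolding b inv8_def nc_add_def nc_smult_def
      using s1 by (auto simp: nc_bracket_def mul_nil mul_one mul_two letter_def algebra_simps)
  qed
next
  case ri_zero then show ?case by (simp add: inv8_def)
next
  case (ri_add p q)
  define C :: 'k where "C = 2 * of_nat g - 2"
  have "p [GT] + q [GT] + C * (p [GX 1, GY 1] + q [GX 1, GY 1]) =
     (p [GT] + C * p [GX 1, GY 1]) + (q [GT] + C * q [GX 1, GY 1])" by (simp add: algebra_simps)
  with ri_add.IH show ?case by (simp add: inv8_def nc_add_def C_def)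
next
  case (ri_smult p c) then show ?case
    by (simp add: inv8_def nc_smult_def algebra_simps)
       (metis distrib_left mult.left_commute mult_zero_right)
next
  case (ri_bracket p q)
  have q0: "q [] = 0" using fl_nil[OF ri_bracket.hyps(2)] .
  show ?case using ri_bracket.IH q0
    by (auto simp: inv8_def nc_bracket_def mul_nil mul_one mul_two)
qed

lemma t_notin_I: "g \<ge> 1 \<Longrightarrow> (letter GT :: 'k::field nc) \<notin> rel_ideal g"
  using inv_I[of g "letter GT"] by (auto simp: inv8_def letter_def)

lemma center_supset:
  fixes u :: "'k::field nc"
  assumes u: "u \<in> free_lie g" and c: "nc_add u (nc_smult (- c) (letter GT)) \<in> rel_ideal g"
  shows "u \<in> center_reps g"
  unfolding center_reps_def
proof (safe intro!: u)
  fix v :: "'k nc" assume v: "v \<in> free_lie g"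
  define r where "r = nc_add u (nc_smult (- c) (letter GT))"
  have "u = (\<lambda>w. r w + c * letter GT w)" by (auto simp: r_def nc_add_def nc_smult_def)
  then have "nc_bracket u v = (\<lambda>w. nc_bracket r v w + c * nc_bracket (letter GT) v w)"
    by (simp add: br_add_left br_smult_left)
  moreover have "\<dots> \<in> rel_ideal g"
    using c v by (intro I_add I_smult I_br_right t_br) (auto simp: r_def)
  ultimately show "nc_bracket u v \<in> rel_ideal g" by simp
qed



definition xb :: "nat \<Rightarrow> nat \<Rightarrow> gen" where "xb k n = GX (prod_encode (k, n))"
definition yb :: "nat \<Rightarrow> nat \<Rightarrow> gen" where "yb k n = GY (prod_encode (k, n))"

definition Bset :: "nat \<Rightarrow> gen set" where
  "Bset g = {xb k n | k n. 2 \<le> k \<and> k \<le> g} \<union> {yb k n | k n. 2 \<le> k \<and> k \<le> g} \<union> {GT}"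

inductive_set bfl :: "nat \<Rightarrow> 'k::field nc set" for g where
  b_gen: "a \<in> Bset g \<Longrightarrow> letter a \<in> bfl g"
| b_zero: "(\<lambda>_. 0) \<in> bfl g"
| b_add: "p \<in> bfl g \<Longrightarrow> q \<in> bfl g \<Longrightarrow> (\<lambda>w. p w + q w) \<in> bfl g"
| b_smult: "p \<in> bfl g \<Longrightarrow> (\<lambda>w. c * p w) \<in> bfl g"
| b_bracket: "p \<in> bfl g \<Longrightarrow> q \<in> bfl g \<Longrightarrow> nc_bracket p q \<in> bfl g"

definition adx :: "nat \<Rightarrow> 'k::field nc \<Rightarrow> 'k nc" where
  "adx n p = (nc_bracket (letter (GX 1)) ^^ n) p"

fun psil :: "gen \<Rightarrow> 'k::field nc" where
  "psil (GX j) = adx (snd (prod_decode j)) (letter (GX (fst (prod_decode j))))"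
| "psil (GY j) = adx (snd (prod_decode j)) (letter (GY (fst (prod_decode j))))"
| "psil GT = letter (GY 1)"

fun psiw :: "gen list \<Rightarrow> 'k::field nc" where
  "psiw [] = one"
| "psiw (a # w) = nc_mul (psil a) (psiw w)"

definition Psi :: "'k::field nc \<Rightarrow> 'k nc" where "Psi p = lin psiw p"

fun dl :: "nat \<Rightarrow> gen \<Rightarrow> 'k::field nc" where
  "dl g (GX j) = letter (GX (prod_encode (fst (prod_decode j), Suc (snd (prod_decode j)))))"
| "dl g (GY j) = letter (GY (prod_encode (fst (prod_decode j), Suc (snd (prod_decode j)))))"
| "dl g GT = (\<lambda>w. \<Sum>k\<in>{2..g}. (-1) * nc_bracket (letter (xb k 0)) (letter (yb k 0)) w)"

fun dw :: "nat \<Rightarrow> gen list \<Rightarrow> 'k::field nc" where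
  "dw g [] = (\<lambda>_. 0)"
| "dw g (a # w) = (\<lambda>x. nc_mul (dl g a) (mon w) x + nc_mul (letter a) (dw g w) x)"

definition Dop :: "nat \<Rightarrow> 'k::field nc \<Rightarrow> 'k nc" where "Dop g p = lin (dw g) p"

lemma dl_xb: "dl g (xb k n) = letter (xb k (Suc n))" by (simp add: xb_def)
lemma dl_yb: "dl g (yb k n) = letter (yb k (Suc n))" by (simp add: yb_def)
lemma psil_xb: "psil (xb k n) = adx n (letter (GX k))" by (simp add: xb_def)
lemma psil_yb: "psil (yb k n) = adx n (letter (GY k))" by (simp add: yb_def)

lemma fin_dl: "fin (dl g a)"
proof (cases a)
  case GT
  show ?thesis unfolding GT dl.simps by (rule fin_sum) (auto intro: fin_bracket fin_letter)
qed (auto intro: fin_letter)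

lemma fin_dw: "fin (dw g w)"
  by (induction w) (auto intro!: fin_zero fin_add fin_mul fin_dl fin_mon fin_letter)

lemma Dop_fin: "fin p \<Longrightarrow> fin (Dop g p)"
  unfolding Dop_def by (rule lin_fin) (auto intro: fin_dw)

lemma dw_append: "dw g (u @ v) = (\<lambda>x. nc_mul (dw g u) (mon v) x + nc_mul (mon u) (dw g v) x)"
proof (induction u)
  case Nil then show ?case
    by (simp add: nc_mul_zero_left flip: one_mon add: nc_mul_one_left)
next
  case (Cons a u)
  show ?case
    by (rule ext) (simp add: Cons nc_mul_add_left nc_mul_add_right nc_mul_assoc mon_append mon_Cons)
qed

lemma Dop_mul:
  assumes p: "fin p" and q: "fin q"
  shows "Dop g (nc_mul p q) = (\<lambda>x. nc_mul (Dop g p) q x + nc_mul p (Dop g q) x)"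
proof -
  have "Dop g (nc_mul p q) = lin (\<lambda>u. lin (\<lambda>v. dw g (u @ v)) q) p"
    unfolding Dop_def by (rule lin_mul[OF p q])
  also have "\<dots> = lin (\<lambda>u x. lin (\<lambda>v. nc_mul (dw g u) (mon v)) q x + lin (\<lambda>v. nc_mul (mon u) (dw g v)) q x) p"
    by (simp only: dw_append lin_fadd)
  also have "\<dots> = lin (\<lambda>u x. nc_mul (dw g u) q x + nc_mul (mon u) (Dop g q) x) p"
    by (simp only: Dop_def flip: mul_lin_right add: lin_mon_id[OF q])
  also have "\<dots> = (\<lambda>x. nc_mul (Dop g p) q x + nc_mul p (Dop g q) x)"
    by (simp only: lin_fadd Dop_def flip: mul_lin_left add: lin_mon_id[OF p])
  finally show ?thesis .
qed

lemma Dop_add: "fin p \<Longrightarrow> fin q \<Longrightarrow> Dop g (\<lambda>w. p w + q w) = (\<lambda>x. Dop g p x + Dop g q x)"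
  unfolding Dop_def by (rule lin_add)
lemma Dop_diff: "fin p \<Longrightarrow> fin q \<Longrightarrow> Dop g (\<lambda>w. p w - q w) = (\<lambda>x. Dop g p x - Dop g q x)"
  unfolding Dop_def by (rule lin_diff)
lemma Dop_smult: "fin p \<Longrightarrow> Dop g (\<lambda>w. c * p w) = (\<lambda>x. c * Dop g p x)"
  unfolding Dop_def by (rule lin_smult)
lemma Dop_zero: "Dop g (\<lambda>w. 0) = (\<lambda>x. 0)"
  unfolding Dop_def by (rule lin_zero)
lemma Dop_letter: "Dop g (letter a) = dl g a"
  unfolding Dop_def letter_mon lin_mon
  by (simp add: nc_mul_zero_right flip: one_mon add: nc_mul_one_right)
lemma Dop_one: "Dop g one = (\<lambda>x. 0)"
  unfolding Dop_def one_mon lin_mon by simp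
lemma Dop_bracket: "fin p \<Longrightarrow> fin q \<Longrightarrow>
   Dop g (nc_bracket p q) = (\<lambda>x. nc_bracket (Dop g p) q x + nc_bracket p (Dop g q) x)"
  unfolding nc_bracket_def
  by (rule ext) (simp add: Dop_diff fin_mul Dop_mul)

lemma psiw_append: "psiw (u @ v) = nc_mul (psiw u) (psiw v)"
  by (induction u) (simp_all add: nc_mul_one_left nc_mul_assoc)

lemma Psi_mul:
  assumes p: "fin p" and q: "fin q"
  shows "Psi (nc_mul p q) = nc_mul (Psi p) (Psi q)"
proof -
  have "Psi (nc_mul p q) = lin (\<lambda>u. lin (\<lambda>v. psiw (u @ v)) q) p"
    unfolding Psi_def by (rule lin_mul[OF p q])
  also have "\<dots> = nc_mul (Psi p) (Psi q)"
    by (simp only: psiw_append Psi_def flip: mul_lin_right mul_lin_left)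
  finally show ?thesis .
qed

lemma Psi_add: "fin p \<Longrightarrow> fin q \<Longrightarrow> Psi (\<lambda>w. p w + q w) = (\<lambda>x. Psi p x + Psi q x)"
  unfolding Psi_def by (rule lin_add)
lemma Psi_diff: "fin p \<Longrightarrow> fin q \<Longrightarrow> Psi (\<lambda>w. p w - q w) = (\<lambda>x. Psi p x - Psi q x)"
  unfolding Psi_def by (rule lin_diff)
lemma Psi_smult: "fin p \<Longrightarrow> Psi (\<lambda>w. c * p w) = (\<lambda>x. c * Psi p x)"
  unfolding Psi_def by (rule lin_smult)
lemma Psi_zero: "Psi (\<lambda>w. 0) = (\<lambda>x. 0)"
  unfolding Psi_def by (rule lin_zero)
lemma Psi_letter: "Psi (letter a) = psil a"
  unfolding Psi_def letter_mon lin_mon by (simp add: nc_mul_one_right)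
lemma Psi_bracket: "fin p \<Longrightarrow> fin q \<Longrightarrow> Psi (nc_bracket p q) = nc_bracket (Psi p) (Psi q)"
  unfolding nc_bracket_def
  by (rule ext) (simp add: Psi_diff fin_mul Psi_mul)



definition linop :: "('k::field nc \<Rightarrow> 'k nc) \<Rightarrow> bool" where
  "linop T \<longleftrightarrow> (\<forall>p q. fin p \<longrightarrow> fin q \<longrightarrow> T (\<lambda>w. p w + q w) = (\<lambda>w. T p w + T q w)) \<and>
     (\<forall>p c. fin p \<longrightarrow> T (\<lambda>w. c * p w) = (\<lambda>w. c * T p w)) \<and> (\<forall>p. fin p \<longrightarrow> fin (T p))"

lemma linop_add: "linop T \<Longrightarrow> fin p \<Longrightarrow> fin q \<Longrightarrow> T (\<lambda>w. p w + q w) = (\<lambda>w. T p w + T q w)"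
  unfolding linop_def by blast
lemma linop_smult: "linop T \<Longrightarrow> fin p \<Longrightarrow> T (\<lambda>w. c * p w) = (\<lambda>w. c * T p w)"
  unfolding linop_def by blast
lemma linop_fin: "linop T \<Longrightarrow> fin p \<Longrightarrow> fin (T p)"
  unfolding linop_def by blast
lemma linop_zero: "linop T \<Longrightarrow> T (\<lambda>w. 0) = (\<lambda>w. 0)"
  using linop_smult[of T "\<lambda>w. 0" 0] by (simp add: fin_zero)
lemma linop_sum:
  assumes T: "linop T" and S: "finite S" and G: "\<And>v. v \<in> S \<Longrightarrow> fin (G v)"
  shows "T (\<lambda>w. \<Sum>v\<in>S. c v * G v w) = (\<lambda>w. \<Sum>v\<in>S. c v * T (G v) w)"
  using S G
proof (induction S rule: finite_induct)
  case empty then show ?case by (simp add: linop_zero[OF T])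
next
  case (insert x F)
  have "T (\<lambda>w. \<Sum>v\<in>insert x F. c v * G v w) = T (\<lambda>w. c x * G x w + (\<Sum>v\<in>F. c v * G v w))"
    using insert by simp
  also have "\<dots> = (\<lambda>w. T (\<lambda>w. c x * G x w) w + T (\<lambda>w. \<Sum>v\<in>F. c v * G v w) w)"
    using insert by (intro linop_add[OF T] fin_smult fin_sum) auto
  also have "\<dots> = (\<lambda>w. \<Sum>v\<in>insert x F. c v * T (G v) w)"
    using insert by (simp add: linop_smult[OF T])
  finally show ?case .
qed
lemma linop_lin: "linop T \<Longrightarrow> fin q \<Longrightarrow> (\<And>v. fin (G v)) \<Longrightarrow> T (lin G q) = lin (\<lambda>v. T (G v)) q"
  unfolding lin_def by (rule linop_sum) auto
lemma linop_diff: "linop T \<Longrightarrow> fin p \<Longrightarrow> fin q \<Longrightarrow> T (\<lambda>w. p w - q w) = (\<lambda>w. T p w - T q w)"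
  using linop_add[of T p "\<lambda>w. (-1) * q w"] linop_smult[of T q "-1"] fin_smult[of q "-1"] by simp

lemma linop_comp: "linop S \<Longrightarrow> linop T \<Longrightarrow> linop (\<lambda>f. S (T f))"
  unfolding linop_def by simp
lemma linop_id: "linop (\<lambda>f. f)" unfolding linop_def by simp
lemma linop_mul: "fin b \<Longrightarrow> linop (nc_mul b)"
  unfolding linop_def by (simp add: nc_mul_add_right nc_mul_smult_right fin_mul)
lemma linop_Dop: "linop (Dop g)"
  unfolding linop_def by (simp add: Dop_add Dop_smult Dop_fin)
lemma linop_0: "linop (\<lambda>f w. 0)" unfolding linop_def by (simp add: fin_zero)

fun hl :: "nat \<Rightarrow> gen \<Rightarrow> 'k::field nc \<Rightarrow> 'k nc" where
  "hl g (GX k) = (if k = 1 then Dop g else nc_mul (letter (xb k 0)))"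
| "hl g (GY k) = (if k = 1 then nc_mul (letter GT) else nc_mul (letter (yb k 0)))"
| "hl g GT = (\<lambda>f w. 0)"

fun ev :: "nat \<Rightarrow> gen list \<Rightarrow> 'k::field nc \<Rightarrow> 'k nc" where
  "ev g [] f = f"
| "ev g (a # w) f = hl g a (ev g w f)"

definition Act :: "nat \<Rightarrow> 'k::field nc \<Rightarrow> 'k nc \<Rightarrow> 'k nc" where
  "Act g p f = lin (\<lambda>w. ev g w f) p"

lemma linop_hl: "linop (hl g a)"
  by (cases a) (auto simp: linop_Dop linop_mul fin_letter linop_0)

lemma linop_ev: "linop (ev g w :: 'k::field nc \<Rightarrow> 'k nc)"
proof (induction w)
  case Nil then show ?case using linop_id by (simp add: fun_eq_iff[symmetric])
next
  case (Cons a w)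
  have "linop (\<lambda>f::'k nc. hl g a (ev g w f))"
    using linop_comp[of "hl g a" "ev g w", OF linop_hl Cons.IH] by simp
  then show ?case by simp
qed

lemma ev_append: "ev g (u @ v) f = ev g u (ev g v f)"
  by (induction u) auto

lemma Act_fin: "fin p \<Longrightarrow> fin f \<Longrightarrow> fin (Act g p f)"
  unfolding Act_def by (rule lin_fin) (auto intro: linop_fin[OF linop_ev])

lemma Act_mul:
  assumes p: "fin p" and q: "fin q" and f: "fin f"
  shows "Act g (nc_mul p q) f = Act g p (Act g q f)"
proof -
  have "Act g (nc_mul p q) f = lin (\<lambda>u. lin (\<lambda>v. ev g (u @ v) f) q) p"
    unfolding Act_def by (rule lin_mul[OF p q])
  also have "\<dots> = lin (\<lambda>u. ev g u (lin (\<lambda>v. ev g v f) q)) p"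
    by (simp only: ev_append linop_lin[OF linop_ev q linop_fin[OF linop_ev f]])
  finally show ?thesis by (simp add: Act_def)
qed

lemma Act_add: "fin p \<Longrightarrow> fin q \<Longrightarrow> Act g (\<lambda>w. p w + q w) f = (\<lambda>x. Act g p f x + Act g q f x)"
  unfolding Act_def by (rule lin_add)
lemma Act_diff: "fin p \<Longrightarrow> fin q \<Longrightarrow> Act g (\<lambda>w. p w - q w) f = (\<lambda>x. Act g p f x - Act g q f x)"
  unfolding Act_def by (rule lin_diff)
lemma Act_smult: "fin p \<Longrightarrow> Act g (\<lambda>w. c * p w) f = (\<lambda>x. c * Act g p f x)"
  unfolding Act_def by (rule lin_smult)
lemma Act_zero: "Act g (\<lambda>w. 0) f = (\<lambda>x. 0)"
  unfolding Act_def by (rule lin_zero)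
lemma Act_letter: "Act g (letter a) f = hl g a f"
  unfolding Act_def letter_mon lin_mon by simp
lemma Act_bracket: "fin p \<Longrightarrow> fin q \<Longrightarrow> fin f \<Longrightarrow>
   Act g (nc_bracket p q) f = (\<lambda>x. Act g p (Act g q f) x - Act g q (Act g p f) x)"
  unfolding nc_bracket_def by (simp add: Act_diff fin_mul Act_mul)
lemma Act_zero_arg: "Act g p (\<lambda>w. 0) = (\<lambda>x. 0)"
  unfolding Act_def by (simp add: linop_zero[OF linop_ev] lin_fzero)
lemma Act_sum: "finite S \<Longrightarrow> (\<And>k. k \<in> S \<Longrightarrow> fin (X k)) \<Longrightarrow>
   Act g (\<lambda>w. \<Sum>k\<in>S. X k w) f = (\<lambda>x. \<Sum>k\<in>S. Act g (X k) f x)"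
  unfolding Act_def using lin_sum[of S X _ "\<lambda>_. 1"] by simp



lemma Act_I:
  fixes p :: "'k::field nc"
  assumes g: "g \<ge> 1" and p: "p \<in> rel_ideal g"
  shows "\<forall>f. fin f \<longrightarrow> Act g p f = (\<lambda>x. 0)"
  using p
proof (induction rule: rel_ideal.induct)
  case (ri_rel r)
  from ri_rel consider (a) a where "r = nc_bracket (letter GT) (letter a)"
    | (b) "r = nc_add (\<lambda>w. \<Sum>k\<in>{1..g}. nc_bracket (letter (GX k)) (letter (GY k)) w)
            (nc_smult (2 - 2 * of_nat g) (letter GT))"
    unfolding rels_def by blast
  then show ?case
  proof cases
    case (a a)
    show ?thesis unfolding a
      by (auto simp: Act_bracket fin_letter Act_letter linop_zero[OF linop_hl])
  next
    case b
    show ?thesis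
    proof (intro allI impI)
      fix f :: "'k nc" assume f: "fin f"
      define B where "B = (\<lambda>k. nc_mul (nc_bracket (letter (xb k 0)) (letter (yb k 0))) f :: 'k nc)"
      have k1: "Act g (nc_bracket (letter (GX 1)) (letter (GY 1))) f = (\<lambda>x. \<Sum>k\<in>{2..g}. (-1) * B k x)"
      proof -
        have "Act g (nc_bracket (letter (GX 1)) (letter (GY 1))) f =
            (\<lambda>x. Dop g (nc_mul (letter GT) f) x - nc_mul (letter GT) (Dop g f) x)"
          by (simp add: Act_bracket fin_letter f Act_letter)
        also have "\<dots> = nc_mul (dl g GT) f"
          by (simp add: Dop_mul fin_letter f Dop_letter)
        also have "\<dots> = (\<lambda>x. \<Sum>k\<in>{2..g}. (-1) * B k x)"
          unfolding dl.simps B_def by (rule nc_mul_sum_left)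
        finally show ?thesis .
      qed
      have k2: "Act g (nc_bracket (letter (GX k)) (letter (GY k))) f = B k" if "k \<in> {2..g}" for k
      proof -
        have "Act g (nc_bracket (letter (GX k)) (letter (GY k))) f =
          (\<lambda>x. hl g (GX k) (hl g (GY k) f) x - hl g (GY k) (hl g (GX k) f) x)"
          by (simp add: Act_bracket fin_letter f Act_letter)
        also have "\<dots> = B k" using that
          by (simp add: B_def nc_bracket_def nc_mul_diff_left nc_mul_assoc)
        finally show ?thesis .
      qed
      have fins: "fin (nc_bracket (letter (GX k)) (letter (GY k)) :: 'k nc)" for k
        by (intro fin_bracket fin_letter)
      have "Act g r f = (\<lambda>x. (\<Sum>k\<in>{1..g}. Act g (nc_bracket (letter (GX k)) (letter (GY k))) f x)
           + (2 - 2 * of_nat g) * Act g (letter GT) f x)"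
        unfolding b nc_add_def nc_smult_def
        by (simp add: Act_add fin_sum' fins fin_smult fin_letter Act_smult Act_sum)
      also have "\<dots> = (\<lambda>x. (\<Sum>k\<in>{1..g}. Act g (nc_bracket (letter (GX k)) (letter (GY k))) f x))"
        by (simp add: Act_letter)
      also have "\<dots> = (\<lambda>x. 0)"
      proof (rule ext)
        fix x
        have e: "{1..g} = insert 1 {2..g}" using g by auto
        have "(\<Sum>k\<in>{1..g}. Act g (nc_bracket (letter (GX k)) (letter (GY k))) f x) =
            (\<Sum>k\<in>{2..g}. (-1) * B k x) + (\<Sum>k\<in>{2..g}. B k x)"
        proof -
          have "(\<Sum>k\<in>insert 1 {2..g}. Act g (nc_bracket (letter (GX k)) (letter (GY k))) f x) =
            Act g (nc_bracket (letter (GX 1)) (letter (GY 1))) f x +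
            (\<Sum>k\<in>{2..g}. Act g (nc_bracket (letter (GX k)) (letter (GY k))) f x)"
            by (rule sum.insert) auto
          also have "\<dots> = (\<Sum>k\<in>{2..g}. (-1) * B k x) + (\<Sum>k\<in>{2..g}. B k x)"
            unfolding k1 using k2 by simp
          finally show ?thesis unfolding e .
        qed
        also have "\<dots> = 0" by (simp add: sum_negf)
        finally show "(\<Sum>k\<in>{1..g}. Act g (nc_bracket (letter (GX k)) (letter (GY k))) f x) = 0" .
      qed
      finally show "Act g r f = (\<lambda>x. 0)" .
    qed
  qed
next
  case ri_zero then show ?case by (simp add: Act_zero)
next
  case (ri_add p q) then show ?case by (simp add: nc_add_def Act_add ri_fin)
next
  case (ri_smult p c) then show ?case by (simp add: nc_smult_def Act_smult ri_fin)
next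
  case (ri_bracket p q)
  show ?case
  proof (intro allI impI)
    fix f :: "'k nc" assume f: "fin f"
    have "Act g (nc_bracket p q) f = (\<lambda>x. Act g p (Act g q f) x - Act g q (Act g p f) x)"
      using ri_bracket f by (simp add: Act_bracket ri_fin fl_fin)
    also have "\<dots> = (\<lambda>x. 0)"
      using ri_bracket f by (simp add: Act_fin fl_fin Act_zero_arg)
    finally show "Act g (nc_bracket p q) f = (\<lambda>x. 0)" .
  qed
qed



lemma bfl_fin: "m \<in> bfl g \<Longrightarrow> fin (m :: 'k::field nc)"
  by (induction rule: bfl.induct) (auto intro: fin_letter fin_zero fin_add fin_smult fin_bracket)

lemma bfl_nil: "m \<in> bfl g \<Longrightarrow> (m :: 'k::field nc) [] = 0"
  by (induction rule: bfl.induct) (auto simp: letter_def nc_bracket_def nc_mul_def)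

lemma bfl_sum: "finite S \<Longrightarrow> (\<And>k. k \<in> S \<Longrightarrow> X k \<in> bfl g) \<Longrightarrow>
   (\<lambda>w. \<Sum>k\<in>S. c k * X k w) \<in> (bfl g :: 'k::field nc set)"
proof (induction S rule: finite_induct)
  case empty then show ?case by (simp add: b_zero)
next
  case (insert x F)
  then show ?case by (simp, intro b_add b_smult) auto
qed

lemma Dop_bfl: "m \<in> bfl g \<Longrightarrow> Dop g m \<in> (bfl g :: 'k::field nc set)"
proof (induction rule: bfl.induct)
  case (b_gen a)
  then consider (x) k n where "a = xb k n" "2 \<le> k" "k \<le> g" | (y) k n where "a = yb k n" "2 \<le> k" "k \<le> g"
    | (t) "a = GT" unfolding Bset_def by blast
  then show ?case
  proof cases
    case x
    have "xb k (Suc n) \<in> Bset g" using x unfolding Bset_def by blast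
    then show ?thesis using x by (simp add: Dop_letter dl_xb bfl.b_gen)
  next
    case y
    have "yb k (Suc n) \<in> Bset g" using y unfolding Bset_def by blast
    then show ?thesis using y by (simp add: Dop_letter dl_yb bfl.b_gen)
  next
    case t show ?thesis unfolding Dop_letter t dl.simps
    proof (rule bfl_sum[where c="\<lambda>_. -1" and X="\<lambda>k. nc_bracket (letter (xb k 0)) (letter (yb k 0))"])
      fix k assume "k \<in> {2..g}"
      then have k: "2 \<le> k" "k \<le> g" by auto
      have "xb k 0 \<in> Bset g" "yb k 0 \<in> Bset g" unfolding Bset_def using k by blast+
      then show "nc_bracket (letter (xb k 0)) (letter (yb k 0)) \<in> (bfl g :: 'k nc set)"
        by (intro b_bracket bfl.b_gen)
    qed simp
  qed
next
  case b_zero then show ?case by (simp add: Dop_zero bfl.b_zero)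
next
  case (b_add p q) then show ?case by (simp add: Dop_add bfl_fin bfl.b_add)
next
  case (b_smult p c) then show ?case by (simp add: Dop_smult bfl_fin bfl.b_smult)
next
  case (b_bracket p q) then show ?case by (simp add: Dop_bracket bfl_fin bfl.b_add bfl.b_bracket)
qed

lemma adx_F: "g \<ge> 1 \<Longrightarrow> p \<in> free_lie g \<Longrightarrow> adx n p \<in> (free_lie g :: 'k::field nc set)"
  by (induction n) (auto simp: adx_def gens_def intro!: fl_bracket fl_gen)

lemma adx_Suc: "adx (Suc n) p = nc_bracket (letter (GX 1)) (adx n p)"
  by (simp add: adx_def)
lemma adx_0: "adx 0 p = p" by (simp add: adx_def)

lemma Psi_F:
  assumes g: "g \<ge> 1"
  shows "m \<in> bfl g \<Longrightarrow> Psi m \<in> (free_lie g :: 'k::field nc set)"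
proof (induction rule: bfl.induct)
  case (b_gen a)
  then show ?case using g
    by (auto simp: Bset_def Psi_letter psil_xb psil_yb gens_def intro!: adx_F fl_gen)
next
  case b_zero then show ?case by (simp add: Psi_zero fl_zero)
next
  case (b_add p q) then show ?case by (simp add: Psi_add bfl_fin F_add)
next
  case (b_smult p c) then show ?case by (simp add: Psi_smult bfl_fin F_smult)
next
  case (b_bracket p q) then show ?case by (simp add: Psi_bracket bfl_fin fl_bracket)
qed

definition inJ :: "nat \<Rightarrow> 'k::field nc \<Rightarrow> bool" where
  "inJ g q \<longleftrightarrow> (\<exists>c. (\<lambda>w. q w - c * letter GT w) \<in> rel_ideal g)"

lemma inJ_I: "q \<in> rel_ideal g \<Longrightarrow> inJ g q"
  unfolding inJ_def by (rule exI[of _ 0]) simp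
lemma inJ_0: "inJ g (\<lambda>w. 0)"
  by (rule inJ_I) (rule ri_zero)
lemma inJ_t: "inJ g (letter GT)"
  unfolding inJ_def by (rule exI[of _ 1]) (simp add: ri_zero)
lemma inJ_add: "inJ g p \<Longrightarrow> inJ g q \<Longrightarrow> inJ g (\<lambda>w. p w + q w)"
  unfolding inJ_def
proof (elim exE)
  fix c d assume "(\<lambda>w. p w - c * letter GT w) \<in> rel_ideal g" "(\<lambda>w. q w - d * letter GT w) \<in> rel_ideal g"
  from I_add[OF this] show "\<exists>e. (\<lambda>w. p w + q w - e * letter GT w) \<in> rel_ideal g"
    by (intro exI[of _ "c + d"]) (simp add: algebra_simps)
qed
lemma inJ_smult: "inJ g p \<Longrightarrow> inJ g (\<lambda>w. a * p w)"
  unfolding inJ_def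
proof (elim exE)
  fix c assume "(\<lambda>w. p w - c * letter GT w) \<in> rel_ideal g"
  from I_smult[OF this, of a] show "\<exists>e. (\<lambda>w. a * p w - e * letter GT w) \<in> rel_ideal g"
    by (intro exI[of _ "a * c"]) (simp add: algebra_simps)
qed
lemma inJ_diff: "inJ g p \<Longrightarrow> inJ g q \<Longrightarrow> inJ g (\<lambda>w. p w - q w)"
  using inJ_add[of g p "\<lambda>w. (-1) * q w"] inJ_smult[of g q "-1"] by simp
lemma inJ_br: "inJ g p \<Longrightarrow> q \<in> free_lie g \<Longrightarrow> inJ g (nc_bracket p q)"
  unfolding inJ_def
proof (elim exE)
  fix c assume p: "(\<lambda>w. p w - c * letter GT w) \<in> rel_ideal g" and q: "q \<in> free_lie g"
  have "nc_bracket p q = (\<lambda>w. nc_bracket (\<lambda>w. p w - c * letter GT w) q w + c * nc_bracket (letter GT) q w)"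
    by (simp add: br_diff_left br_smult_left)
  also have "\<dots> \<in> rel_ideal g"
    by (intro I_add I_smult I_br_right p q t_br)
  finally show "\<exists>e. (\<lambda>w. nc_bracket p q w - e * letter GT w) \<in> rel_ideal g"
    by (intro exI[of _ 0]) simp
qed
lemma inJ_br_left: "inJ g p \<Longrightarrow> q \<in> free_lie g \<Longrightarrow> inJ g (nc_bracket q p)"
  using inJ_smult[OF inJ_br, of g p q "-1"] by (simp add: br_antisym[of q p])

lemma omega_J:
  "inJ g (\<lambda>w. \<Sum>k\<in>{1..g}. nc_bracket (letter (GX k)) (letter (GY k)) w :: 'k::field)"
  unfolding inJ_def
proof (rule exI[of _ "-(2 - 2 * of_nat g)"])
  have "nc_add (\<lambda>w. \<Sum>k\<in>{1..g}. nc_bracket (letter (GX k)) (letter (GY k)) w)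
            (nc_smult (2 - 2 * of_nat g) (letter GT)) \<in> (rel_ideal g :: 'k nc set)"
    by (rule ri_rel) (simp add: rels_def)
  moreover have "(\<lambda>w. (\<Sum>k\<in>{1..g}. nc_bracket (letter (GX k)) (letter (GY k)) w) -
      - (2 - 2 * of_nat g) * letter GT w) = nc_add (\<lambda>w. \<Sum>k\<in>{1..g}. nc_bracket (letter (GX k)) (letter (GY k)) w)
            (nc_smult (2 - 2 * of_nat g) (letter GT) :: 'k nc)"
    by (rule ext) (simp add: nc_add_def nc_smult_def algebra_simps)
  ultimately show "(\<lambda>w. (\<Sum>k\<in>{1..g}. nc_bracket (letter (GX k)) (letter (GY k)) w) -
      - (2 - 2 * of_nat g) * letter GT w) \<in> (rel_ideal g :: 'k nc set)"
    by simp
qed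



lemma Psi_sum: "finite S \<Longrightarrow> (\<And>k. k \<in> S \<Longrightarrow> fin (X k)) \<Longrightarrow>
   Psi (\<lambda>w. \<Sum>k\<in>S. c k * X k w) = (\<lambda>x. \<Sum>k\<in>S. c k * Psi (X k) x)"
  unfolding Psi_def by (rule lin_sum)

lemma key:
  fixes m :: "'k::field nc"
  assumes g: "g \<ge> 2" and m: "m \<in> bfl g"
  shows "inJ g (\<lambda>w. nc_bracket (letter (GX 1)) (Psi m) w - Psi (Dop g m) w)"
  using m
proof (induction rule: bfl.induct)
  case (b_gen a)
  then consider (x) k n where "a = xb k n" | (y) k n where "a = yb k n" | (t) "a = GT"
    unfolding Bset_def by blast
  then show ?case
  proof cases
    case x then show ?thesis
      by (simp add: Psi_letter Dop_letter dl_xb psil_xb adx_Suc inJ_0)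
  next
    case y then show ?thesis
      by (simp add: Psi_letter Dop_letter dl_yb psil_yb adx_Suc inJ_0)
  next
    case t
    have "Psi (Dop g (letter GT)) = (\<lambda>x. \<Sum>k\<in>{2..g}. (-1) * Psi (nc_bracket (letter (xb k 0)) (letter (yb k 0))) x :: 'k)"
      unfolding Dop_letter dl.simps by (rule Psi_sum) (auto intro: fin_bracket fin_letter)
    also have "\<dots> = (\<lambda>x. \<Sum>k\<in>{2..g}. (-1) * nc_bracket (letter (GX k)) (letter (GY k)) x)"
      by (simp add: Psi_bracket fin_letter Psi_letter psil_xb psil_yb adx_0)
    finally have e1: "Psi (Dop g (letter GT)) = (\<lambda>x. \<Sum>k\<in>{2..g}. (-1) * nc_bracket (letter (GX k)) (letter (GY k)) x :: 'k)" .
    have e: "{1..g} = insert 1 {2..g}" using g by auto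
    have "(\<lambda>w. nc_bracket (letter (GX 1)) (Psi (letter GT)) w - Psi (Dop g (letter GT)) w) =
        (\<lambda>w. \<Sum>k\<in>{1..g}. nc_bracket (letter (GX k)) (letter (GY k)) w :: 'k)"
    proof (rule ext)
      fix w
      have "(\<Sum>k\<in>insert 1 {2..g}. nc_bracket (letter (GX k)) (letter (GY k)) w :: 'k) =
         nc_bracket (letter (GX 1)) (letter (GY 1)) w + (\<Sum>k\<in>{2..g}. nc_bracket (letter (GX k)) (letter (GY k)) w)"
        by (rule sum.insert) auto
      then show "nc_bracket (letter (GX 1)) (Psi (letter GT)) w - Psi (Dop g (letter GT)) w =
        (\<Sum>k\<in>{1..g}. nc_bracket (letter (GX k)) (letter (GY k)) w :: 'k)"
        unfolding e e1 by (simp add: Psi_letter sum_negf)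
    qed
    then show ?thesis using omega_J[of g] t by simp
  qed
next
  case b_zero then show ?case by (simp add: Psi_zero Dop_zero br_zero_right inJ_0)
next
  case (b_add p q)
  have fp: "fin p" "fin q" "fin (Dop g p)" "fin (Dop g q)"
    using b_add by (auto simp: bfl_fin Dop_fin)
  have "(\<lambda>w. nc_bracket (letter (GX 1)) (Psi (\<lambda>w. p w + q w)) w - Psi (Dop g (\<lambda>w. p w + q w)) w) =
     (\<lambda>w. (nc_bracket (letter (GX 1)) (Psi p) w - Psi (Dop g p) w) +
          (nc_bracket (letter (GX 1)) (Psi q) w - Psi (Dop g q) w))"
    using fp by (rule_tac ext) (simp add: Psi_add Dop_add br_add_right)
  then show ?case using inJ_add[OF b_add.IH] by simp
next
  case (b_smult p c)
  have fp: "fin p" "fin (Dop g p)"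
    using b_smult by (auto simp: bfl_fin Dop_fin)
  have "(\<lambda>w. nc_bracket (letter (GX 1)) (Psi (\<lambda>w. c * p w)) w - Psi (Dop g (\<lambda>w. c * p w)) w) =
     (\<lambda>w. c * (nc_bracket (letter (GX 1)) (Psi p) w - Psi (Dop g p) w))"
    using fp by (simp add: Psi_smult Dop_smult br_smult_right algebra_simps)
  then show ?case using inJ_smult[OF b_smult.IH] by simp
next
  case (b_bracket p q)
  have fp: "fin p" "fin q" "fin (Dop g p)" "fin (Dop g q)"
    using b_bracket by (auto simp: bfl_fin Dop_fin)
  have F: "Psi p \<in> free_lie g" "Psi q \<in> free_lie g"
    using b_bracket g by (auto intro: Psi_F)
  define A where "A = (\<lambda>w. nc_bracket (letter (GX 1)) (Psi p) w - Psi (Dop g p) w)"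
  define B where "B = (\<lambda>w. nc_bracket (letter (GX 1)) (Psi q) w - Psi (Dop g q) w)"
  have "(\<lambda>w. nc_bracket (letter (GX 1)) (Psi (nc_bracket p q)) w - Psi (Dop g (nc_bracket p q)) w) =
     (\<lambda>w. nc_bracket A (Psi q) w + nc_bracket (Psi p) B w)"
    unfolding A_def B_def
    using fp by (rule_tac ext) (simp add: Psi_bracket Dop_bracket Psi_add fin_bracket jacobi[of "letter (GX (Suc 0))" "Psi p" "Psi q"]
        br_diff_left br_diff_right)
  moreover have "inJ g (\<lambda>w. nc_bracket A (Psi q) w + nc_bracket (Psi p) B w)"
    using b_bracket F unfolding A_def B_def by (intro inJ_add inJ_br inJ_br_left) auto
  ultimately show ?case by simp
qed



lemma main_rep:
  fixes p :: "'k::field nc"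
  assumes g: "g \<ge> 2" and p: "p \<in> free_lie g"
  shows "\<exists>c m. m \<in> bfl g \<and> (\<forall>f. fin f \<longrightarrow> Act g p f = (\<lambda>w. c * Dop g f w + nc_mul m f w)) \<and>
     inJ g (\<lambda>w. p w - c * letter (GX 1) w - Psi m w)"
  using p
proof (induction rule: free_lie.induct)
  case (fl_gen a)
  then consider (x1) "a = GX 1" | (xk) k where "a = GX k" "2 \<le> k" "k \<le> g"
    | (y1) "a = GY 1" | (yk) k where "a = GY k" "2 \<le> k" "k \<le> g" | (t) "a = GT"
    unfolding gens_def by force
  then show ?case
  proof cases
    case x1
    show ?thesis
      by (rule exI[of _ 1], rule exI[of _ "\<lambda>_. 0"])
         (simp add: x1 b_zero Act_letter nc_mul_zero_left Psi_zero inJ_0)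
  next
    case xk
    have "xb k 0 \<in> Bset g" using xk unfolding Bset_def by blast
    then show ?thesis using xk
      by (intro exI[of _ 0] exI[of _ "letter (xb k 0)"])
         (simp add: bfl.b_gen Act_letter Psi_letter psil_xb adx_0 inJ_0)
  next
    case y1
    have "GT \<in> Bset g" unfolding Bset_def by blast
    then show ?thesis using y1
      by (intro exI[of _ 0] exI[of _ "letter GT"])
         (simp add: bfl.b_gen Act_letter Psi_letter inJ_0)
  next
    case yk
    have "yb k 0 \<in> Bset g" using yk unfolding Bset_def by blast
    then show ?thesis using yk
      by (intro exI[of _ 0] exI[of _ "letter (yb k 0)"])
         (simp add: bfl.b_gen Act_letter Psi_letter psil_yb adx_0 inJ_0)
  next
    case t
    show ?thesis
      by (rule exI[of _ 0], rule exI[of _ "\<lambda>_. 0"])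
         (simp add: t b_zero Act_letter nc_mul_zero_left Psi_zero inJ_t)
  qed
next
  case fl_zero
  show ?case
    by (rule exI[of _ 0], rule exI[of _ "\<lambda>_. 0"])
       (simp add: b_zero Act_zero nc_mul_zero_left Psi_zero inJ_0)
next
  case (fl_add p q)
  from fl_add.IH obtain c1 m1 c2 m2 where
    m1: "m1 \<in> bfl g" "\<forall>f. fin f \<longrightarrow> Act g p f = (\<lambda>w. c1 * Dop g f w + nc_mul m1 f w)"
        "inJ g (\<lambda>w. p w - c1 * letter (GX 1) w - Psi m1 w)" and
    m2: "m2 \<in> bfl g" "\<forall>f. fin f \<longrightarrow> Act g q f = (\<lambda>w. c2 * Dop g f w + nc_mul m2 f w)"
        "inJ g (\<lambda>w. q w - c2 * letter (GX 1) w - Psi m2 w)" by blast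
  have fins: "fin p" "fin q" "fin m1" "fin m2" using fl_add m1 m2 by (auto intro: fl_fin bfl_fin)
  show ?case
  proof (intro exI[of _ "c1 + c2"] exI[of _ "\<lambda>w. m1 w + m2 w"] conjI allI impI)
    show "(\<lambda>w. m1 w + m2 w) \<in> bfl g" using m1 m2 by (intro b_add)
    fix f :: "'k nc" assume f: "fin f"
    show "Act g (nc_add p q) f = (\<lambda>w. (c1 + c2) * Dop g f w + nc_mul (\<lambda>w. m1 w + m2 w) f w)"
      using m1 m2 f fins by (simp add: nc_add_def Act_add nc_mul_add_left algebra_simps)
  next
    have "(\<lambda>w. nc_add p q w - (c1 + c2) * letter (GX 1) w - Psi (\<lambda>w. m1 w + m2 w) w) =
      (\<lambda>w. (p w - c1 * letter (GX 1) w - Psi m1 w) + (q w - c2 * letter (GX 1) w - Psi m2 w))"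
      using fins by (simp add: nc_add_def Psi_add algebra_simps)
    then show "inJ g (\<lambda>w. nc_add p q w - (c1 + c2) * letter (GX 1) w - Psi (\<lambda>w. m1 w + m2 w) w)"
      using inJ_add[OF m1(3) m2(3)] by simp
  qed
next
  case (fl_smult p a)
  from fl_smult.IH obtain c1 m1 where
    m1: "m1 \<in> bfl g" "\<forall>f. fin f \<longrightarrow> Act g p f = (\<lambda>w. c1 * Dop g f w + nc_mul m1 f w)"
        "inJ g (\<lambda>w. p w - c1 * letter (GX 1) w - Psi m1 w)" by blast
  have fins: "fin p" "fin m1" using fl_smult m1 by (auto intro: fl_fin bfl_fin)
  show ?case
  proof (intro exI[of _ "a * c1"] exI[of _ "\<lambda>w. a * m1 w"] conjI allI impI)
    show "(\<lambda>w. a * m1 w) \<in> bfl g" using m1 by (intro b_smult)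
    fix f :: "'k nc" assume f: "fin f"
    show "Act g (nc_smult a p) f = (\<lambda>w. (a * c1) * Dop g f w + nc_mul (\<lambda>w. a * m1 w) f w)"
      using m1 f fins by (simp add: nc_smult_def Act_smult nc_mul_smult_left algebra_simps)
  next
    have "(\<lambda>w. nc_smult a p w - (a * c1) * letter (GX 1) w - Psi (\<lambda>w. a * m1 w) w) =
      (\<lambda>w. a * (p w - c1 * letter (GX 1) w - Psi m1 w))"
      using fins by (simp add: nc_smult_def Psi_smult algebra_simps)
    then show "inJ g (\<lambda>w. nc_smult a p w - (a * c1) * letter (GX 1) w - Psi (\<lambda>w. a * m1 w) w)"
      using inJ_smult[OF m1(3)] by simp
  qed
next
  case (fl_bracket p q)
  from fl_bracket.IH obtain c1 m1 c2 m2 where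
    m1: "m1 \<in> bfl g" "\<forall>f. fin f \<longrightarrow> Act g p f = (\<lambda>w. c1 * Dop g f w + nc_mul m1 f w)"
        "inJ g (\<lambda>w. p w - c1 * letter (GX 1) w - Psi m1 w)" and
    m2: "m2 \<in> bfl g" "\<forall>f. fin f \<longrightarrow> Act g q f = (\<lambda>w. c2 * Dop g f w + nc_mul m2 f w)"
        "inJ g (\<lambda>w. q w - c2 * letter (GX 1) w - Psi m2 w)" by blast
  have fins: "fin p" "fin q" "fin m1" "fin m2" "fin (Dop g m1)" "fin (Dop g m2)"
    using fl_bracket m1 m2 by (auto intro: fl_fin bfl_fin Dop_fin)
  define m where "m = (\<lambda>w. c1 * Dop g m2 w + ((- c2) * Dop g m1 w + nc_bracket m1 m2 w))"
  show ?case
  proof (intro exI[of _ 0] exI[of _ m] conjI allI impI)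
    show "m \<in> bfl g" unfolding m_def using m1 m2
      by (intro b_add b_smult b_bracket Dop_bfl)
    fix f :: "'k nc" assume f: "fin f"
    have fDf: "fin (Dop g f)" "fin (Dop g (Dop g f))" using f by (auto intro: Dop_fin)
    have Aq: "Act g q f = (\<lambda>w. c2 * Dop g f w + nc_mul m2 f w)" using m2 f by blast
    have Ap: "Act g p f = (\<lambda>w. c1 * Dop g f w + nc_mul m1 f w)" using m1 f by blast
    have fAq: "fin (\<lambda>w. c2 * Dop g f w + nc_mul m2 f w)" and fAp: "fin (\<lambda>w. c1 * Dop g f w + nc_mul m1 f w)"
      using fins fDf f by (auto intro!: fin_add fin_smult fin_mul)
    have A1: "Act g p (Act g q f) = (\<lambda>w. c1 * (c2 * Dop g (Dop g f) w + (nc_mul (Dop g m2) f w + nc_mul m2 (Dop g f) w))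
        + (c2 * nc_mul m1 (Dop g f) w + nc_mul m1 (nc_mul m2 f) w))"
      unfolding Aq using m1(2) fAq fins fDf f
      by (simp add: Dop_add Dop_smult Dop_mul fin_smult fin_mul nc_mul_add_right nc_mul_smult_right)
    have A2: "Act g q (Act g p f) = (\<lambda>w. c2 * (c1 * Dop g (Dop g f) w + (nc_mul (Dop g m1) f w + nc_mul m1 (Dop g f) w))
        + (c1 * nc_mul m2 (Dop g f) w + nc_mul m2 (nc_mul m1 f) w))"
      unfolding Ap using m2(2) fAp fins fDf f
      by (simp add: Dop_add Dop_smult Dop_mul fin_smult fin_mul nc_mul_add_right nc_mul_smult_right)
    show "Act g (nc_bracket p q) f = (\<lambda>w. 0 * Dop g f w + nc_mul m f w)"
      unfolding Act_bracket[OF fins(1,2) f] A1 A2 unfolding m_def nc_bracket_def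
      by (rule ext) (simp add: nc_mul_add_left nc_mul_smult_left nc_mul_diff_left nc_mul_assoc algebra_simps)
  next
    define x1 :: "'k nc" where "x1 = letter (GX 1)"
    define dp where "dp = (\<lambda>w. p w - c1 * x1 w - Psi m1 w)"
    define dq where "dq = (\<lambda>w. q w - c2 * x1 w - Psi m2 w)"
    define P where "P = (\<lambda>w. c1 * x1 w + Psi m1 w)"
    define Q where "Q = (\<lambda>w. c2 * x1 w + Psi m2 w)"
    define K1 where "K1 = (\<lambda>w. nc_bracket x1 (Psi m1) w - Psi (Dop g m1) w)"
    define K2 where "K2 = (\<lambda>w. nc_bracket x1 (Psi m2) w - Psi (Dop g m2) w)"
    have x1F: "x1 \<in> free_lie g" unfolding x1_def using g by (intro fl_gen) (auto simp: gens_def)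
    have PF: "P \<in> free_lie g" unfolding P_def using x1F Psi_F[OF _ m1(1)] g
      by (intro F_add F_smult) auto
    have pe: "p = (\<lambda>w. dp w + P w)" by (rule ext) (simp add: dp_def P_def)
    have qe: "q = (\<lambda>w. dq w + Q w)" by (rule ext) (simp add: dq_def Q_def)
    have E1: "nc_bracket p q = (\<lambda>w. nc_bracket dp q w + nc_bracket P dq w + nc_bracket P Q w)"
    proof -
      have "nc_bracket p q = (\<lambda>w. nc_bracket dp q w + nc_bracket P q w)"
        by (subst pe) (simp add: br_add_left)
      also have "nc_bracket P q = (\<lambda>w. nc_bracket P dq w + nc_bracket P Q w)"
        by (subst qe) (simp add: br_add_right)
      finally show ?thesis by (simp add: add.assoc)
    qed
    have E2: "nc_bracket P Q = (\<lambda>w. c1 * nc_bracket x1 (Psi m2) w - c2 * nc_bracket x1 (Psi m1) w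
        + nc_bracket (Psi m1) (Psi m2) w)"
      unfolding P_def Q_def
      by (rule ext) (simp add: br_add_left br_add_right br_smult_left br_smult_right br_self
          br_antisym[of "Psi m1" x1] algebra_simps)
    have E3: "Psi m = (\<lambda>w. c1 * Psi (Dop g m2) w + ((- c2) * Psi (Dop g m1) w + nc_bracket (Psi m1) (Psi m2) w))"
    proof -
      have a: "fin (\<lambda>w. c1 * Dop g m2 w)" "fin (\<lambda>w. (- c2) * Dop g m1 w)" "fin (nc_bracket m1 m2)"
        by (rule fin_smult[OF fins(6)], rule fin_smult[OF fins(5)], rule fin_bracket[OF fins(3,4)])
      have b: "fin (\<lambda>w. (- c2) * Dop g m1 w + nc_bracket m1 m2 w)" by (rule fin_add[OF a(2,3)])
      show ?thesis unfolding m_def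
        by (simp only: Psi_add[OF a(1) b] Psi_add[OF a(2,3)] Psi_smult[OF fins(6)] Psi_smult[OF fins(5)]
            Psi_bracket[OF fins(3,4)])
    qed
    have T: "(\<lambda>w. nc_bracket p q w - 0 * x1 w - Psi m w) =
       (\<lambda>w. nc_bracket dp q w + (nc_bracket P dq w + (c1 * K2 w + (- c2) * K1 w)))"
      unfolding E1 E2 E3 K1_def K2_def by (rule ext) (simp add: algebra_simps)
    have "inJ g (\<lambda>w. nc_bracket dp q w + (nc_bracket P dq w + (c1 * K2 w + (- c2) * K1 w)))"
      using m1(3) m2(3) fl_bracket.hyps PF key[OF g m1(1)] key[OF g m2(1)]
      unfolding dp_def dq_def K1_def K2_def x1_def
      by (intro inJ_add inJ_br inJ_br_left inJ_smult) auto
    then show "inJ g (\<lambda>w. nc_bracket p q w - 0 * letter (GX 1) w - Psi m w)"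
      using T by (simp add: x1_def)
  qed
qed



lemma comm_letter_val:
  assumes "nc_mul m (letter a) = nc_mul (letter a) m"
  shows "m (x # w) = (if x = a then m (w @ [a]) else 0)"
proof -
  have "nc_mul m (letter a) (x # w @ [a]) = nc_mul (letter a) m (x # w @ [a])" using assms by simp
  then show ?thesis
    unfolding letter_mon nc_mul_mon_left nc_mul_mon_right by simp
qed

lemma comm_zero:
  assumes m0: "m [] = 0" and a: "nc_mul m (letter a) = nc_mul (letter a) m"
    and b: "nc_mul m (letter b) = nc_mul (letter b) m" and ab: "a \<noteq> b"
  shows "m = (\<lambda>_. 0)"
proof
  fix w show "m w = 0"
  proof (cases w)
    case Nil then show ?thesis using m0 by simp
  next
    case (Cons x w')
    show ?thesis using comm_letter_val[OF a, of x w'] comm_letter_val[OF b, of x w'] ab Cons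
      by (cases "x = a") auto
  qed
qed

lemma center_sub:
  fixes u :: "'k::field nc"
  assumes g: "g \<ge> 2" and u: "u \<in> center_reps g"
  shows "\<exists>c. nc_add u (nc_smult (- c) (letter GT)) \<in> rel_ideal g"
proof -
  have uF: "u \<in> free_lie g" and uc: "\<And>v. v \<in> free_lie g \<Longrightarrow> nc_bracket u v \<in> rel_ideal g"
    using u unfolding center_reps_def by auto
  obtain c m where m: "m \<in> bfl g" and A: "\<forall>f. fin f \<longrightarrow> Act g u f = (\<lambda>w. c * Dop g f w + nc_mul m f w)"
    and J: "inJ g (\<lambda>w. u w - c * letter (GX 1) w - Psi m w)"
    using main_rep[OF g uF] by blast
  have fm: "fin m" and m0: "m [] = 0" using m by (auto intro: bfl_fin bfl_nil)
  have g1: "g \<ge> 1" using g by simp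
  have step: "(\<lambda>w. c * Dop g b w + nc_mul m b w - nc_mul b m w) = (\<lambda>w. 0)"
    if v: "v \<in> free_lie g" and hv: "\<And>f. Act g v f = nc_mul b f" and fb: "fin b" for v b
  proof -
    have fv: "fin v" using v by (rule fl_fin)
    have "Act g (nc_bracket u v) one = (\<lambda>x. 0)"
      using Act_I[OF g1 uc[OF v]] fin_one by blast
    moreover have "Act g (nc_bracket u v) one = (\<lambda>x. Act g u (Act g v one) x - Act g v (Act g u one) x)"
      by (rule Act_bracket[OF fl_fin[OF uF] fv fin_one])
    moreover have "Act g v one = b" by (simp add: hv nc_mul_one_right)
    moreover have "Act g u one = m"
    proof -
      have "Act g u one = (\<lambda>w. c * Dop g one w + nc_mul m one w)" using A fin_one by blast
      then show ?thesis by (simp add: Dop_one nc_mul_one_right)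
    qed
    ultimately show ?thesis using A fb by (simp add: hv)
  qed
  have x2: "letter (GX 2) \<in> (free_lie g :: 'k nc set)" "letter (GY 2) \<in> (free_lie g :: 'k nc set)"
    using g by (auto intro!: fl_gen simp: gens_def)
  have sx: "(\<lambda>w. c * Dop g (letter (xb 2 0)) w + nc_mul m (letter (xb 2 0)) w - nc_mul (letter (xb 2 0)) m w) = (\<lambda>w. 0)"
    by (rule step[OF x2(1)]) (auto simp: Act_letter fin_letter)
  have sy: "(\<lambda>w. c * Dop g (letter (yb 2 0)) w + nc_mul m (letter (yb 2 0)) w - nc_mul (letter (yb 2 0)) m w) = (\<lambda>w. 0)"
    by (rule step[OF x2(2)]) (auto simp: Act_letter fin_letter)
  have "c = 0"
  proof -
    have "c * Dop g (letter (xb 2 0)) [xb 2 1] + nc_mul m (letter (xb 2 0)) [xb 2 1] - nc_mul (letter (xb 2 0)) m [xb 2 1] = 0"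
      using fun_cong[OF sx, of "[xb 2 1]"] by simp
    then show ?thesis using m0 unfolding Dop_letter dl_xb by (simp add: mul_one letter_def xb_def)
  qed
  then have "nc_mul m (letter (xb 2 0)) = nc_mul (letter (xb 2 0)) m"
    "nc_mul m (letter (yb 2 0)) = nc_mul (letter (yb 2 0)) m"
    using sx sy by (auto simp: fun_eq_iff)
  then have "m = (\<lambda>_. 0)" using comm_zero[of m, OF m0] by (simp add: xb_def yb_def)
  then have "inJ g u" using J by (simp add: \<open>c = 0\<close> Psi_zero)
  then obtain d where "(\<lambda>w. u w - d * letter GT w) \<in> rel_ideal g" unfolding inJ_def by blast
  moreover have "(\<lambda>w. u w - d * letter GT w) = nc_add u (nc_smult (- d) (letter GT))"
    by (simp add: nc_add_def nc_smult_def)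
  ultimately show ?thesis by auto
qed

theorem lemma8p2:
  fixes g :: nat
  assumes "g \<ge> 2"
  shows "center_reps g =
           {u \<in> free_lie g. \<exists>c::'k::field_char_0.
              nc_add u (nc_smult (- c) (letter GT)) \<in> rel_ideal g}
         \<and> (letter GT :: 'k nc) \<notin> rel_ideal g"
proof
  show "center_reps g = {u \<in> free_lie g. \<exists>c::'k::field_char_0.
              nc_add u (nc_smult (- c) (letter GT)) \<in> rel_ideal g}"
  proof (rule set_eqI, rule iffI)
    fix u :: "'k nc" assume "u \<in> center_reps g"
    then show "u \<in> {u \<in> free_lie g. \<exists>c::'k. nc_add u (nc_smult (- c) (letter GT)) \<in> rel_ideal g}"
      using center_sub[OF assms] by (auto simp: center_reps_def)
  next
    fix u :: "'k nc"
    assume "u \<in> {u \<in> free_lie g. \<exists>c::'k. nc_add u (nc_smult (- c) (letter GT)) \<in> rel_ideal g}"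
    then show "u \<in> center_reps g" using center_supset by blast
  qed
next
  show "(letter GT :: 'k nc) \<notin> rel_ideal g" using assms by (intro t_notin_I) simp
qed

end
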